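(* If $\mathfrak M$ is a saturated structure of cardinality $\kappa$ with $\kappa=\kappa^\omega$, then $\mathfrak M$ has the homomorphism lifting property.
   Context: Signatures are relational (possibly with constants). An infinite $\mathfrak M$ is saturated if for every sequence of fewer than $|M|$ parameters, every set of first-order formulas in one free variable over these parameters consistent with the theory of $\mathfrak M$ with the parameters named is realised in $M$. $\mathfrak M$ has the homomorphism lifting property if for all $a_1,\dots,a_k\in M^\omega$ and $b_1,\dots,b_k\in M$ such that every pp-$(\tau\cup\{c_1,\dots,c_k\})$-sentence (existentially quantified conjunction of atoms) true in $(\mathfrak M^\omega;a_1,\dots,a_k)$ is true in $(\mathfrak M;b_1,\dots,b_k)$, there is a homomorphism $f:\mathfrak M^\omega\to\mathfrak M$ (direct power) with $f(a_i)=b_i$ for all $i$. *)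

theory Defs
  imports Main "HOL-Library.Equipollence"
begin

record ('r, 'c, 'a) struct =
  Univ :: "'a set"
  Rel  :: "'r \<Rightarrow> 'a list \<Rightarrow> bool"
  Cst  :: "'c \<Rightarrow> 'a"

definition wf_struct :: "('r \<Rightarrow> nat) \<Rightarrow> ('r, 'c, 'a) struct \<Rightarrow> bool" where
  "wf_struct ar M \<longleftrightarrow> Univ M \<noteq> {}
     \<and> (\<forall>c. Cst M c \<in> Univ M)
     \<and> (\<forall>R xs. Rel M R xs \<longrightarrow> length xs = ar R \<and> set xs \<subseteq> Univ M)"

datatype ('c, 'p) trm = Var nat | Con 'c | Par 'p

datatype ('r, 'c, 'p) fm =
    Eq "('c, 'p) trm" "('c, 'p) trm"
  | Atom 'r "('c, 'p) trm list"
  | Neg "('r, 'c, 'p) fm"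
  | Conj "('r, 'c, 'p) fm" "('r, 'c, 'p) fm"
  | Ex nat "('r, 'c, 'p) fm"

fun teval :: "('r, 'c, 'a) struct \<Rightarrow> ('p \<Rightarrow> 'a) \<Rightarrow> (nat \<Rightarrow> 'a) \<Rightarrow> ('c, 'p) trm \<Rightarrow> 'a" where
  "teval M p e (Var x) = e x"
| "teval M p e (Con c) = Cst M c"
| "teval M p e (Par q) = p q"

fun sat :: "('r, 'c, 'a) struct \<Rightarrow> ('p \<Rightarrow> 'a) \<Rightarrow> (nat \<Rightarrow> 'a) \<Rightarrow> ('r, 'c, 'p) fm \<Rightarrow> bool" where
  "sat M p e (Eq s t) = (teval M p e s = teval M p e t)"
| "sat M p e (Atom R ts) = Rel M R (map (teval M p e) ts)"
| "sat M p e (Neg \<phi>) = (\<not> sat M p e \<phi>)"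
| "sat M p e (Conj \<phi> \<psi>) = (sat M p e \<phi> \<and> sat M p e \<psi>)"
| "sat M p e (Ex x \<phi>) = (\<exists>a\<in>Univ M. sat M p (e(x := a)) \<phi>)"

fun tfv :: "('c, 'p) trm \<Rightarrow> nat set" where
  "tfv (Var x) = {x}" | "tfv (Con c) = {}" | "tfv (Par q) = {}"

fun tpar :: "('c, 'p) trm \<Rightarrow> 'p set" where
  "tpar (Var x) = {}" | "tpar (Con c) = {}" | "tpar (Par q) = {q}"

fun fv :: "('r, 'c, 'p) fm \<Rightarrow> nat set" where
  "fv (Eq s t) = tfv s \<union> tfv t"
| "fv (Atom R ts) = (\<Union>t\<in>set ts. tfv t)"
| "fv (Neg \<phi>) = fv \<phi>"
| "fv (Conj \<phi> \<psi>) = fv \<phi> \<union> fv \<psi>"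
| "fv (Ex x \<phi>) = fv \<phi> - {x}"

fun params :: "('r, 'c, 'p) fm \<Rightarrow> 'p set" where
  "params (Eq s t) = tpar s \<union> tpar t"
| "params (Atom R ts) = (\<Union>t\<in>set ts. tpar t)"
| "params (Neg \<phi>) = params \<phi>"
| "params (Conj \<phi> \<psi>) = params \<phi> \<union> params \<psi>"
| "params (Ex x \<phi>) = params \<phi>"

text \<open>Truth of a sentence (no free variables): holds under every assignment into
 the carrier (equivalently under some, since the carrier is nonempty).\<close>

definition true_in :: "('r, 'c, 'a) struct \<Rightarrow> ('p \<Rightarrow> 'a) \<Rightarrow> ('r, 'c, 'p) fm \<Rightarrow> bool" where
  "true_in M p \<phi> \<longleftrightarrow> (\<forall>e. range e \<subseteq> Univ M \<longrightarrow> sat M p e \<phi>)"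

fun is_atom_conj :: "('r, 'c, 'p) fm \<Rightarrow> bool" where
  "is_atom_conj (Eq s t) = True"
| "is_atom_conj (Atom R ts) = True"
| "is_atom_conj (Conj \<phi> \<psi>) = (is_atom_conj \<phi> \<and> is_atom_conj \<psi>)"
| "is_atom_conj _ = False"

fun is_pp :: "('r, 'c, 'p) fm \<Rightarrow> bool" where
  "is_pp (Ex x \<phi>) = is_pp \<phi>"
| "is_pp \<phi> = is_atom_conj \<phi>"

text \<open>A set of formulas in the single free variable 0 with parameters from the
 carrier (parameter symbols are the elements themselves, named by the identity).
 Consistency with the theory of M with the parameters named is expressed as
 finite satisfiability in M (equivalent by compactness, since that theory is complete).\<close>

definition realised :: "('r, 'c, 'a) struct \<Rightarrow> ('r, 'c, 'a) fm set \<Rightarrow> bool" where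
  "realised M \<Sigma> \<longleftrightarrow> (\<exists>a\<in>Univ M. \<forall>\<phi>\<in>\<Sigma>. sat M id (\<lambda>_. a) \<phi>)"

definition consistent_with_theory :: "('r, 'c, 'a) struct \<Rightarrow> ('r, 'c, 'a) fm set \<Rightarrow> bool" where
  "consistent_with_theory M \<Sigma> \<longleftrightarrow> (\<forall>\<Sigma>0 \<subseteq> \<Sigma>. finite \<Sigma>0 \<longrightarrow> realised M \<Sigma>0)"

definition saturated :: "('r, 'c, 'a) struct \<Rightarrow> bool" where
  "saturated M \<longleftrightarrow> infinite (Univ M) \<and>
     (\<forall>A \<Sigma>. A \<subseteq> Univ M \<longrightarrow> A \<prec> Univ M \<longrightarrow>
        (\<forall>\<phi>\<in>\<Sigma>. fv \<phi> \<subseteq> {0} \<and> params \<phi> \<subseteq> A) \<longrightarrow>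
        consistent_with_theory M \<Sigma> \<longrightarrow> realised M \<Sigma>)"

definition power_omega :: "('r, 'c, 'a) struct \<Rightarrow> ('r, 'c, nat \<Rightarrow> 'a) struct" where
  "power_omega M = \<lparr> Univ = {f. \<forall>n. f n \<in> Univ M},
     Rel = (\<lambda>R fs. \<forall>n. Rel M R (map (\<lambda>f. f n) fs)),
     Cst = (\<lambda>c n. Cst M c) \<rparr>"

definition is_hom :: "('r, 'c, 'a) struct \<Rightarrow> ('r, 'c, 'b) struct \<Rightarrow> ('a \<Rightarrow> 'b) \<Rightarrow> bool" where
  "is_hom A B h \<longleftrightarrow> (\<forall>x\<in>Univ A. h x \<in> Univ B)
     \<and> (\<forall>R xs. set xs \<subseteq> Univ A \<longrightarrow> Rel A R xs \<longrightarrow> Rel B R (map h xs))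
     \<and> (\<forall>c. h (Cst A c) = Cst B c)"

text \<open>Homomorphism lifting property. The k new constants c_1..c_k are the
 parameter symbols 0..k-1 (type nat), interpreted by the lists as and bs.\<close>

definition hom_lifting :: "('r, 'c, 'a) struct \<Rightarrow> bool" where
  "hom_lifting M \<longleftrightarrow>
    (\<forall>(as :: (nat \<Rightarrow> 'a) list) (bs :: 'a list).
       length as = length bs \<longrightarrow>
       set as \<subseteq> Univ (power_omega M) \<longrightarrow> set bs \<subseteq> Univ M \<longrightarrow>
       (\<forall>\<phi> :: ('r, 'c, nat) fm. is_pp \<phi> \<longrightarrow> fv \<phi> = {} \<longrightarrow> params \<phi> \<subseteq> {..<length as} \<longrightarrow>
           true_in (power_omega M) (\<lambda>i. as ! i) \<phi> \<longrightarrow> true_in M (\<lambda>i. bs ! i) \<phi>) \<longrightarrow>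
       (\<exists>h. is_hom (power_omega M) M h \<and> (\<forall>i < length as. h (as ! i) = bs ! i)))"

end

theory Submission
  imports Defs
begin


fun atomic :: "('r, 'c, 'p) fm \<Rightarrow> bool" where
  "atomic (Eq s t) = True"
| "atomic (Atom R ts) = True"
| "atomic _ = False"

fun conjl :: "('r, 'c, 'p) fm list \<Rightarrow> ('r, 'c, 'p) fm" where
  "conjl [] = Eq (Var 0) (Var 0)"
| "conjl (\<phi> # L) = Conj \<phi> (conjl L)"

fun tmap :: "(nat \<Rightarrow> ('c, 'q) trm) \<Rightarrow> ('p \<Rightarrow> ('c, 'q) trm) \<Rightarrow> ('c, 'p) trm \<Rightarrow> ('c, 'q) trm" where
  "tmap \<sigma> \<tau> (Var n) = \<sigma> n"
| "tmap \<sigma> \<tau> (Con c) = Con c"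
| "tmap \<sigma> \<tau> (Par q) = \<tau> q"

fun amap :: "(nat \<Rightarrow> ('c, 'q) trm) \<Rightarrow> ('p \<Rightarrow> ('c, 'q) trm) \<Rightarrow> ('r, 'c, 'p) fm \<Rightarrow> ('r, 'c, 'q) fm" where
  "amap \<sigma> \<tau> (Eq s t) = Eq (tmap \<sigma> \<tau> s) (tmap \<sigma> \<tau> t)"
| "amap \<sigma> \<tau> (Atom R ts) = Atom R (map (tmap \<sigma> \<tau>) ts)"
| "amap \<sigma> \<tau> _ = Eq (Var 0) (Var 0)"

lemma teval_tmap: "teval M p e (tmap \<sigma> \<tau> t) = teval M (\<lambda>q. teval M p e (\<tau> q)) (\<lambda>n. teval M p e (\<sigma> n)) t"
  by (cases t) auto

lemma sat_amap: "atomic \<phi> \<Longrightarrow> sat M p e (amap \<sigma> \<tau> \<phi>) = sat M (\<lambda>q. teval M p e (\<tau> q)) (\<lambda>n. teval M p e (\<sigma> n)) \<phi>"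
  by (cases \<phi>) (auto simp: teval_tmap comp_def)

lemma atomic_amap: "atomic (amap \<sigma> \<tau> \<phi>)"
  by (cases \<phi>) auto

lemma params_amap: "atomic \<phi> \<Longrightarrow> params (amap \<sigma> \<tau> \<phi>) \<subseteq> (\<Union>n\<in>fv \<phi>. tpar (\<sigma> n)) \<union> (\<Union>q\<in>params \<phi>. tpar (\<tau> q))"
proof -
  have t: "tpar (tmap \<sigma> \<tau> t) \<subseteq> (\<Union>n\<in>tfv t. tpar (\<sigma> n)) \<union> (\<Union>q\<in>tpar t. tpar (\<tau> q))" for t
    by (cases t) auto
  assume "atomic \<phi>" then show ?thesis
    using t by (cases \<phi>) (auto, blast+)
qed

lemma fv_amap: "atomic \<phi> \<Longrightarrow> fv (amap \<sigma> \<tau> \<phi>) \<subseteq> (\<Union>n\<in>fv \<phi>. tfv (\<sigma> n)) \<union> (\<Union>q\<in>params \<phi>. tfv (\<tau> q))"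
proof -
  have t: "tfv (tmap \<sigma> \<tau> t) \<subseteq> (\<Union>n\<in>tfv t. tfv (\<sigma> n)) \<union> (\<Union>q\<in>tpar t. tfv (\<tau> q))" for t
    by (cases t) auto
  assume "atomic \<phi>" then show ?thesis
    using t by (cases \<phi>) (auto, blast+)
qed

lemma sat_conjl: "sat M p e (conjl L) = (\<forall>\<phi>\<in>set L. sat M p e \<phi>)"
  by (induction L) auto

lemma fv_conjl: "fv (conjl L) = {0} \<union> (\<Union>\<phi>\<in>set L. fv \<phi>)"
  by (induction L) auto

lemma params_conjl: "params (conjl L) = (\<Union>\<phi>\<in>set L. params \<phi>)"
  by (induction L) auto

lemma is_pp_conjl: "\<forall>\<phi>\<in>set L. atomic \<phi> \<Longrightarrow> is_atom_conj (conjl L)"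
proof (induction L)
  case (Cons a L)
  then have "atomic a" by simp
  then have "is_atom_conj a" by (cases a) auto
  then show ?case using Cons by auto
qed auto

lemma is_pp_foldr: "is_pp (foldr Ex vs \<phi>) = is_pp \<phi>"
  by (induction vs) auto

lemma atomic_iac: "atomic \<phi> \<Longrightarrow> is_atom_conj \<phi>"
  by (cases \<phi>) auto

lemma is_pp_conjl2: "\<forall>\<phi>\<in>set L. atomic \<phi> \<Longrightarrow> is_pp (conjl L)"
  using is_pp_conjl[of L] by (cases L) (auto simp: atomic_iac)

lemma fv_foldr: "fv (foldr Ex vs \<phi>) = fv \<phi> - set vs"
  by (induction vs) auto

lemma params_foldr: "params (foldr Ex vs \<phi>) = params \<phi>"
  by (induction vs) auto

lemma teval_coinc: "(\<forall>x\<in>tfv u. e x = e' x) \<Longrightarrow> (\<forall>q\<in>tpar u. p q = p' q) \<Longrightarrow> teval M p e u = teval M p' e' u"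
  by (cases u) auto

lemma sat_coinc: "(\<forall>x\<in>fv \<phi>. e x = e' x) \<Longrightarrow> (\<forall>q\<in>params \<phi>. p q = p' q) \<Longrightarrow> sat M p e \<phi> = sat M p' e' \<phi>"
proof (induction \<phi> arbitrary: e e')
  case (Eq s t)
  have "teval M p e u = teval M p' e' u" if "tfv u \<subseteq> fv (Eq s t)" "tpar u \<subseteq> params (Eq s t)" for u
    using that Eq by (cases u) auto
  then show ?case by auto
next
  case (Atom R ts)
  have "teval M p e u = teval M p' e' u" if "u \<in> set ts" for u
    using that Atom by (intro teval_coinc) auto
  then show ?case by (simp cong: map_cong)
next
  case (Ex x \<phi>)
  have "sat M p (e(x:=a)) \<phi> = sat M p' (e'(x:=a)) \<phi>" for a
    using Ex.prems by (intro Ex.IH) auto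
  then show ?case by simp
next
  case (Conj \<phi>1 \<phi>2)
  have "sat M p e \<phi>1 = sat M p' e' \<phi>1" using Conj.prems by (intro Conj.IH) auto
  moreover have "sat M p e \<phi>2 = sat M p' e' \<phi>2" using Conj.prems by (intro Conj.IH) auto
  ultimately show ?case by simp
next
  case (Neg \<phi>)
  have "sat M p e \<phi> = sat M p' e' \<phi>" using Neg.prems by (intro Neg.IH) auto
  then show ?case by simp
qed

lemma sat_foldr: "sat M p e (foldr Ex vs \<phi>) = (\<exists>e'. (\<forall>x. x \<notin> set vs \<longrightarrow> e' x = e x) \<and> (\<forall>x\<in>set vs. e' x \<in> Univ M) \<and> sat M p e' \<phi>)"
proof (induction vs arbitrary: e)
  case Nil
  then show ?case by (auto, metis ext)
next
  case (Cons v vs)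
  show ?case
  proof
    assume "sat M p e (foldr Ex (v # vs) \<phi>)"
    then obtain a where a: "a \<in> Univ M" "sat M p (e(v:=a)) (foldr Ex vs \<phi>)" by auto
    then obtain e' where "(\<forall>x. x \<notin> set vs \<longrightarrow> e' x = (e(v:=a)) x)" "(\<forall>x\<in>set vs. e' x \<in> Univ M)" "sat M p e' \<phi>"
      using Cons by blast
    then show "\<exists>e'. (\<forall>x. x \<notin> set (v#vs) \<longrightarrow> e' x = e x) \<and> (\<forall>x\<in>set (v#vs). e' x \<in> Univ M) \<and> sat M p e' \<phi>"
    proof (intro exI[of _ e'] conjI)
      show "\<forall>x. x \<notin> set (v#vs) \<longrightarrow> e' x = e x" using \<open>\<forall>x. x \<notin> set vs \<longrightarrow> e' x = (e(v:=a)) x\<close> by auto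
      show "\<forall>x\<in>set (v#vs). e' x \<in> Univ M"
        using \<open>\<forall>x. x \<notin> set vs \<longrightarrow> e' x = (e(v:=a)) x\<close> \<open>\<forall>x\<in>set vs. e' x \<in> Univ M\<close> a(1)
        by (auto split: if_splits)
    qed blast
  next
    assume "\<exists>e'. (\<forall>x. x \<notin> set (v#vs) \<longrightarrow> e' x = e x) \<and> (\<forall>x\<in>set (v#vs). e' x \<in> Univ M) \<and> sat M p e' \<phi>"
    then obtain e' where e': "(\<forall>x. x \<notin> set (v#vs) \<longrightarrow> e' x = e x)" "(\<forall>x\<in>set (v#vs). e' x \<in> Univ M)" "sat M p e' \<phi>" by blast
    have "sat M p (e(v := e' v)) (foldr Ex vs \<phi>)"
      using Cons e' by (intro Cons[THEN iffD2] exI[of _ e']) auto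
    then show "sat M p e (foldr Ex (v # vs) \<phi>)" using e' by auto
  qed
qed

lemma finite_tpar[simp]: "finite (tpar t)" by (cases t) auto
lemma finite_tfv[simp]: "finite (tfv t)" by (cases t) auto

lemma finite_params: "finite (params \<phi>)"
  by (induction \<phi>) auto

lemma finite_fv: "finite (fv \<phi>)"
  by (induction \<phi>) auto



definition funct :: "('x \<times> 'y) set \<Rightarrow> bool" where
  "funct G \<longleftrightarrow> (\<forall>x y z. (x,y) \<in> G \<longrightarrow> (x,z) \<in> G \<longrightarrow> y = z)"

definition gfun :: "('x \<times> 'y) set \<Rightarrow> 'x \<Rightarrow> 'y" where
  "gfun G x = (THE y. (x,y) \<in> G)"

lemma gfun_eq: "funct G \<Longrightarrow> (x,y) \<in> G \<Longrightarrow> gfun G x = y"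
  unfolding gfun_def funct_def by (rule the_equality) auto

definition exq :: "('r, 'c, 'p) fm list \<Rightarrow> ('r, 'c, 'p) fm" where
  "exq K = foldr Ex (sorted_list_of_set (fv (conjl K) - {0})) (conjl K)"

lemma set_exq_vars: "set (sorted_list_of_set (fv (conjl K) - {0})) = fv (conjl K) - {0}"
  using finite_fv[of "conjl K"] by simp

lemma fv_exq: "fv (exq K) \<subseteq> {0}"
  unfolding exq_def fv_foldr set_exq_vars by auto

lemma params_exq: "params (exq K) = (\<Union>\<phi>\<in>set K. params \<phi>)"
  unfolding exq_def params_foldr params_conjl by simp

lemma exq_R:
  assumes "range e \<subseteq> Univ M" "\<forall>\<phi>\<in>set K. sat M p e \<phi>"
  shows "sat M p (\<lambda>_. e 0) (exq K)"
proof -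
  let ?vs = "sorted_list_of_set (fv (conjl K) - {0})"
  define e' where "e' = (\<lambda>x. if x \<in> set ?vs then e x else e 0)"
  have "sat M p e' (conjl K) = sat M p e (conjl K)"
    by (rule sat_coinc) (auto simp: e'_def set_exq_vars)
  then have "sat M p e' (conjl K)" using assms(2) sat_conjl by metis
  then show ?thesis unfolding exq_def sat_foldr
    using assms(1) by (intro exI[of _ e']) (auto simp: e'_def)
qed

lemma exq_R':
  assumes "sat M p (\<lambda>_. b) (exq K)" "b \<in> Univ M"
  shows "\<exists>e. range e \<subseteq> Univ M \<and> e 0 = b \<and> (\<forall>\<phi>\<in>set K. sat M p e \<phi>)"
proof -
  let ?vs = "sorted_list_of_set (fv (conjl K) - {0})"
  obtain e' where e': "\<forall>x. x \<notin> set ?vs \<longrightarrow> e' x = b" "\<forall>x\<in>set ?vs. e' x \<in> Univ M" "sat M p e' (conjl K)"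
    using assms(1) unfolding exq_def sat_foldr by blast
  have "range e' \<subseteq> Univ M" using e' assms(2) by (metis image_subset_iff)
  moreover have "e' 0 = b" using e'(1) set_exq_vars by auto
  ultimately show ?thesis using e'(3) sat_conjl by metis
qed

locale setting =
  fixes ar :: "'r \<Rightarrow> nat" and M :: "('r, 'c, 'a) struct"
  assumes wf: "wf_struct ar M" and satd: "saturated M"
    and card: "{f :: nat \<Rightarrow> 'a. \<forall>n. f n \<in> Univ M} \<approx> Univ M"
begin

abbreviation "PM \<equiv> power_omega M"
abbreviation "P \<equiv> Univ (power_omega M)"
abbreviation "U \<equiv> Univ M"

lemma P_def: "P = {f. \<forall>n. f n \<in> U}" by (simp add: power_omega_def)

definition psat :: "('r, 'c, nat \<Rightarrow> 'a) fm list \<Rightarrow> bool" where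
  "psat L \<longleftrightarrow> (\<exists>e. range e \<subseteq> P \<and> (\<forall>\<phi>\<in>set L. sat PM id e \<phi>))"

definition Inv :: "((nat \<Rightarrow> 'a) \<times> 'a) set \<Rightarrow> bool" where
  "Inv G \<longleftrightarrow> (\<forall>L. (\<forall>\<phi>\<in>set L. atomic \<phi> \<and> params \<phi> \<subseteq> Domain G) \<longrightarrow> psat L \<longrightarrow>
      (\<exists>e. range e \<subseteq> U \<and> (\<forall>\<phi>\<in>set L. sat M (gfun G) e \<phi>)))"

lemma U_ne: "U \<noteq> {}" using wf by (simp add: wf_struct_def)

end



context setting
begin

lemma sat_toM: "atomic \<phi> \<Longrightarrow> sat M id e (amap Var (\<lambda>d. Par (g d)) \<phi>) = sat M g e \<phi>"
  by (simp add: sat_amap)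

lemma sat_toM': "atomic \<phi> \<Longrightarrow> sat M (\<lambda>x. x) e (amap Var (\<lambda>d. Par (g d)) \<phi>) = sat M g e \<phi>"
  by (simp add: sat_amap)

lemma extend:
  assumes G: "funct G" "G \<subseteq> P \<times> U" "Inv G" and small: "gfun G ` Domain G \<prec> U"
    and a: "a \<in> P" "a \<notin> Domain G"
  shows "\<exists>b\<in>U. Inv (insert (a,b) G)"
proof -
  define g where "g = gfun G"
  define D where "D = Domain G"
  define \<psi>L :: "('r, 'c, nat \<Rightarrow> 'a) fm list \<Rightarrow> ('r, 'c, 'a) fm"
    where "\<psi>L L = exq (map (amap Var (\<lambda>d. Par (g d))) L)" for L
  define good where "good L \<longleftrightarrow> (\<forall>\<phi>\<in>set L. atomic \<phi> \<and> params \<phi> \<subseteq> D) \<and>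
      (\<exists>e. range e \<subseteq> P \<and> e 0 = a \<and> (\<forall>\<phi>\<in>set L. sat PM id e \<phi>))" for L
  define \<Sigma> where "\<Sigma> = \<psi>L ` {L. good L}"
  have gU: "g x \<in> U" if xD: "x \<in> D" for x
  proof -
    obtain y where "(x,y) \<in> G" using xD D_def by auto
    then show ?thesis using G(1,2) g_def gfun_eq by fastforce
  qed
  have \<psi>R: "sat M id (\<lambda>_. e 0) (\<psi>L L)" if "range e \<subseteq> U" "\<forall>\<phi>\<in>set L. sat M g e \<phi>" "\<forall>\<phi>\<in>set L. atomic \<phi>" for e L
    unfolding \<psi>L_def using that by (intro exq_R) (auto simp: sat_toM sat_toM')
  have claim: "finite F \<Longrightarrow> F \<subseteq> \<Sigma> \<Longrightarrow> \<exists>L. good L \<and> (\<forall>e. range e \<subseteq> U \<longrightarrow> (\<forall>\<phi>\<in>set L. sat M g e \<phi>) \<longrightarrow> (\<forall>\<psi>\<in>F. sat M id (\<lambda>_. e 0) \<psi>))" for F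
  proof (induction F rule: finite_induct)
    case empty
    have "good []" unfolding good_def using a(1) by (intro conjI exI[of _ "\<lambda>_. a"]) auto
    then show ?case by blast
  next
    case (insert \<psi> F)
    then obtain L2 where L2: "good L2" "\<forall>e. range e \<subseteq> U \<longrightarrow> (\<forall>\<phi>\<in>set L2. sat M g e \<phi>) \<longrightarrow> (\<forall>\<psi>\<in>F. sat M id (\<lambda>_. e 0) \<psi>)"
      by blast
    from insert obtain L1 where L1: "good L1" "\<psi> = \<psi>L L1" unfolding \<Sigma>_def by auto
    obtain e1 where e1: "range e1 \<subseteq> P" "e1 0 = a" "\<forall>\<phi>\<in>set L1. sat PM id e1 \<phi>" using L1 good_def by auto
    obtain e2 where e2: "range e2 \<subseteq> P" "e2 0 = a" "\<forall>\<phi>\<in>set L2. sat PM id e2 \<phi>" using L2 good_def by auto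
    define f1 :: "nat \<Rightarrow> nat" where "f1 n = 2 * n" for n
    define f2 :: "nat \<Rightarrow> nat" where "f2 n = (if n = 0 then 0 else 2 * n - 1)" for n
    define L where "L = map (amap (\<lambda>n. Var (f1 n)) Par) L1 @ map (amap (\<lambda>n. Var (f2 n)) Par) L2"
    define e where "e x = (if even x then e1 (x div 2) else e2 ((x + 1) div 2))" for x
    have ef1: "(\<lambda>n. e (f1 n)) = e1" by (auto simp: e_def f1_def)
    have ef2: "(\<lambda>n. e (f2 n)) = e2"
    proof
      fix n show "e (f2 n) = e2 n"
        using e1(2) e2(2) by (cases n) (auto simp: e_def f2_def)
    qed
    have satren: "sat N p e' (amap (\<lambda>n. Var (f n)) Par \<phi>) = sat N p (\<lambda>n. e' (f n)) \<phi>" if "atomic \<phi>" for N p e' f and \<phi> :: "('r, 'c, nat \<Rightarrow> 'a) fm"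
      using that by (simp add: sat_amap)
    have parren: "params (amap (\<lambda>n. Var (f n)) Par \<phi>) \<subseteq> params \<phi>" if "atomic \<phi>" for f and \<phi> :: "('r, 'c, nat \<Rightarrow> 'a) fm"
      using params_amap[OF that, of "\<lambda>n. Var (f n)" Par] by auto
    have "good L"
    proof -
      have "\<forall>\<phi>\<in>set L. atomic \<phi> \<and> params \<phi> \<subseteq> D"
      proof
        fix \<phi> assume "\<phi> \<in> set L"
        then consider \<phi>' f where "\<phi>' \<in> set L1 \<or> \<phi>' \<in> set L2" "\<phi> = amap (\<lambda>n. Var (f n)) Par \<phi>'"
          unfolding L_def by auto
        then show "atomic \<phi> \<and> params \<phi> \<subseteq> D"
        proof cases
          case (1 \<phi>' f)
          then have "atomic \<phi>'" "params \<phi>' \<subseteq> D" using L1(1) L2(1) unfolding good_def by auto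
          then show ?thesis using 1 parren[of \<phi>' f] atomic_amap by blast
        qed
      qed
      moreover have "range e \<subseteq> P" using e1(1) e2(1) by (auto simp: e_def)
      moreover have "e 0 = a" using e1(2) by (simp add: e_def)
      moreover have "\<forall>\<phi>\<in>set L. sat PM id e \<phi>"
        using e1(3) e2(3) L1(1) L2(1) unfolding L_def good_def by (auto simp: satren ef1 ef2)
      ultimately show ?thesis unfolding good_def by blast
    qed
    moreover have "\<forall>\<psi>'\<in>insert \<psi> F. sat M id (\<lambda>_. e' 0) \<psi>'" if "range e' \<subseteq> U" "\<forall>\<phi>\<in>set L. sat M g e' \<phi>" for e'
    proof -
      have at1: "\<forall>\<phi>\<in>set L1. atomic \<phi>" and at2: "\<forall>\<phi>\<in>set L2. atomic \<phi>" using L1(1) L2(1) good_def by auto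
      have s1: "\<forall>\<phi>\<in>set L1. sat M g (\<lambda>n. e' (f1 n)) \<phi>"
      proof
        fix \<phi> assume "\<phi> \<in> set L1"
        then have "sat M g e' (amap (\<lambda>n. Var (f1 n)) Par \<phi>)" using that(2) unfolding L_def by auto
        moreover have "atomic \<phi>" using at1 \<open>\<phi> \<in> set L1\<close> by blast
        ultimately show "sat M g (\<lambda>n. e' (f1 n)) \<phi>" using satren[of \<phi> M g e' f1] by simp
      qed
      have s2: "\<forall>\<phi>\<in>set L2. sat M g (\<lambda>n. e' (f2 n)) \<phi>"
      proof
        fix \<phi> assume "\<phi> \<in> set L2"
        then have "sat M g e' (amap (\<lambda>n. Var (f2 n)) Par \<phi>)" using that(2) unfolding L_def by auto
        moreover have "atomic \<phi>" using at2 \<open>\<phi> \<in> set L2\<close> by blast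
        ultimately show "sat M g (\<lambda>n. e' (f2 n)) \<phi>" using satren[of \<phi> M g e' f2] by simp
      qed
      have r1: "range (\<lambda>n. e' (f1 n)) \<subseteq> U" "range (\<lambda>n. e' (f2 n)) \<subseteq> U" using that(1) by auto
      have "sat M id (\<lambda>_. e' 0) \<psi>" using \<psi>R[OF r1(1) s1 at1] L1(2) by (simp add: f1_def)
      moreover have "\<forall>\<psi>\<in>F. sat M id (\<lambda>_. (\<lambda>n. e' (f2 n)) 0) \<psi>" using L2(2) r1(2) s2 by blast
      moreover have "(\<lambda>n. e' (f2 n)) 0 = e' 0" by (simp add: f2_def)
      ultimately show ?thesis by simp
    qed
    ultimately show ?case by blast
  qed
  have cons: "consistent_with_theory M \<Sigma>"
    unfolding consistent_with_theory_def
  proof (intro allI impI)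
    fix \<Sigma>0 assume "\<Sigma>0 \<subseteq> \<Sigma>" "finite \<Sigma>0"
    then obtain L where L: "good L" "\<forall>e. range e \<subseteq> U \<longrightarrow> (\<forall>\<phi>\<in>set L. sat M g e \<phi>) \<longrightarrow> (\<forall>\<psi>\<in>\<Sigma>0. sat M id (\<lambda>_. e 0) \<psi>)"
      using claim[OF \<open>finite \<Sigma>0\<close> \<open>\<Sigma>0 \<subseteq> \<Sigma>\<close>] by blast
    have "psat L" using L(1) unfolding good_def psat_def by blast
    moreover have "\<forall>\<phi>\<in>set L. atomic \<phi> \<and> params \<phi> \<subseteq> Domain G" using L(1) unfolding good_def D_def by blast
    ultimately obtain e where "range e \<subseteq> U" "\<forall>\<phi>\<in>set L. sat M g e \<phi>"
      using G(3)[unfolded Inv_def, rule_format, of L] unfolding g_def by blast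
    then show "realised M \<Sigma>0" unfolding realised_def using L(2) by blast
  qed
  have AU: "g ` D \<subseteq> U" using gU by auto
  have fvpar: "\<forall>\<psi>\<in>\<Sigma>. fv \<psi> \<subseteq> {0} \<and> params \<psi> \<subseteq> g ` D"
  proof
    fix \<psi> assume "\<psi> \<in> \<Sigma>"
    then obtain L where L: "good L" "\<psi> = \<psi>L L" unfolding \<Sigma>_def by auto
    have "params (amap Var (\<lambda>d. Par (g d)) \<phi>) \<subseteq> g ` D" if "\<phi> \<in> set L" for \<phi>
    proof -
      have "atomic \<phi>" "params \<phi> \<subseteq> D" using L(1) that good_def by auto
      moreover have "params (amap Var (\<lambda>d. Par (g d)) \<phi>) \<subseteq> (\<Union>q\<in>params \<phi>. {g q})"
        using params_amap[OF \<open>atomic \<phi>\<close>, of Var "\<lambda>d. Par (g d)"] by simp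
      ultimately show ?thesis by blast
    qed
    then show "fv \<psi> \<subseteq> {0} \<and> params \<psi> \<subseteq> g ` D"
      unfolding L(2) \<psi>L_def using fv_exq by (auto simp: params_exq)
  qed
  obtain b where b: "b \<in> U" "\<forall>\<psi>\<in>\<Sigma>. sat M id (\<lambda>_. b) \<psi>"
  proof -
    have small': "g ` D \<prec> U" using small by (simp add: g_def D_def)
    have "realised M \<Sigma>"
      using satd[unfolded saturated_def, THEN conjunct2, rule_format, OF AU small' fvpar[rule_format] cons] .
    then show ?thesis using that unfolding realised_def by blast
  qed
  define G' where "G' = insert (a,b) G"
  have fG': "funct G'" using G(1) a(2) unfolding G'_def funct_def by auto
  have g'D: "gfun G' x = g x" if xD: "x \<in> D" for x
  proof -
    obtain y where "(x,y) \<in> G" using xD D_def by auto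
    moreover have "(x,y) \<in> G'" using \<open>(x,y) \<in> G\<close> by (simp add: G'_def)
    ultimately show ?thesis using gfun_eq[OF fG'] gfun_eq[OF G(1)] g_def by simp
  qed
  have g'a: "gfun G' a = b" using gfun_eq[OF fG', of a b] by (simp add: G'_def)
  have "Inv G'"
    unfolding Inv_def
  proof (intro allI impI)
    fix L' :: "('r, 'c, nat \<Rightarrow> 'a) fm list"
    assume L': "\<forall>\<phi>\<in>set L'. atomic \<phi> \<and> params \<phi> \<subseteq> Domain G'" and "psat L'"
    then obtain e where e: "range e \<subseteq> P" "\<forall>\<phi>\<in>set L'. sat PM id e \<phi>" unfolding psat_def by blast
    define \<tau> :: "(nat \<Rightarrow> 'a) \<Rightarrow> ('c, nat \<Rightarrow> 'a) trm" where "\<tau> q = (if q = a then Var 0 else Par q)" for q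
    define L where "L = map (amap (\<lambda>n. Var (Suc n)) \<tau>) L'"
    define e0 where "e0 = case_nat a e"
    have dom': "Domain G' = insert a D" unfolding G'_def D_def by auto
    have "good L"
    proof -
      have "params (amap (\<lambda>n. Var (Suc n)) \<tau> \<phi>) \<subseteq> D" if "\<phi> \<in> set L'" for \<phi>
      proof -
        have "atomic \<phi>" "params \<phi> \<subseteq> insert a D" using L' that dom' by auto
        show ?thesis
        proof
          fix x assume "x \<in> params (amap (\<lambda>n. Var (Suc n)) \<tau> \<phi>)"
          then obtain q where "q \<in> params \<phi>" "x \<in> tpar (\<tau> q)"
            using params_amap[OF \<open>atomic \<phi>\<close>, of "\<lambda>n. Var (Suc n)" \<tau>] by auto
          then show "x \<in> D" using \<open>params \<phi> \<subseteq> insert a D\<close> by (auto simp: \<tau>_def split: if_splits)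
        qed
      qed
      then have "\<forall>\<phi>\<in>set L. atomic \<phi> \<and> params \<phi> \<subseteq> D" unfolding L_def by (auto simp: atomic_amap)
      moreover have "range e0 \<subseteq> P" using e(1) a(1) by (auto simp: e0_def split: nat.splits) blast
      moreover have "e0 0 = a" by (simp add: e0_def)
      moreover have "\<forall>\<phi>\<in>set L. sat PM id e0 \<phi>"
      proof
        fix \<phi> assume "\<phi> \<in> set L"
        then obtain \<phi>' where "\<phi>' \<in> set L'" "\<phi> = amap (\<lambda>n. Var (Suc n)) \<tau> \<phi>'" unfolding L_def by auto
        moreover have "(\<lambda>q. teval PM id e0 (\<tau> q)) = id" by (auto simp: \<tau>_def e0_def)
        moreover have "(\<lambda>n. teval PM id e0 (Var (Suc n))) = e" by (auto simp: e0_def)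
        ultimately show "sat PM id e0 \<phi>" using e(2) L' by (simp add: sat_amap)
      qed
      ultimately show ?thesis unfolding good_def by blast
    qed
    then have "\<psi>L L \<in> \<Sigma>" unfolding \<Sigma>_def by blast
    then have "sat M id (\<lambda>_. b) (\<psi>L L)" using b by blast
    then obtain e3 where e3: "range e3 \<subseteq> U" "e3 0 = b" "\<forall>\<phi>\<in>set (map (amap Var (\<lambda>d. Par (g d))) L). sat M id e3 \<phi>"
      using exq_R'[of M id b] b(1) unfolding \<psi>L_def by blast
    have "sat M (gfun G') (\<lambda>n. e3 (Suc n)) \<phi>" if "\<phi> \<in> set L'" for \<phi>
    proof -
      have at: "atomic \<phi>" "params \<phi> \<subseteq> insert a D" using L' that dom' by auto
      have "sat M id e3 (amap Var (\<lambda>d. Par (g d)) (amap (\<lambda>n. Var (Suc n)) \<tau> \<phi>))"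
        using e3(3) that unfolding L_def by auto
      then have "sat M g e3 (amap (\<lambda>n. Var (Suc n)) \<tau> \<phi>)" by (simp add: sat_toM sat_toM' atomic_amap)
      then have "sat M (\<lambda>q. teval M g e3 (\<tau> q)) (\<lambda>n. e3 (Suc n)) \<phi>" using at by (simp add: sat_amap)
      moreover have "\<forall>q\<in>params \<phi>. teval M g e3 (\<tau> q) = gfun G' q"
        using at(2) g'D g'a e3(2) by (auto simp: \<tau>_def)
      ultimately show ?thesis using sat_coinc[of \<phi> "\<lambda>n. e3 (Suc n)" "\<lambda>n. e3 (Suc n)" "\<lambda>q. teval M g e3 (\<tau> q)" "gfun G'" M] by auto
    qed
    moreover have "range (\<lambda>n. e3 (Suc n)) \<subseteq> U" using e3(1) by auto
    ultimately show "\<exists>e. range e \<subseteq> U \<and> (\<forall>\<phi>\<in>set L'. sat M (gfun G') e \<phi>)" by blast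
  qed
  then show ?thesis using b(1) G'_def by blast
qed

end



unbundle cardinal_syntax

lemma ordLess_lesspoll: "|A| <o |B| \<Longrightarrow> A \<prec> B"
  unfolding lesspoll_def lepoll_def
  by (metis card_of_ordLeq eqpoll_iff_card_of_ordIso not_ordLess_ordIso ordLess_imp_ordLeq)

lemma small_lemma:
  fixes P :: "'x set" and U :: "'y set" and g :: "'x \<Rightarrow> 'y"
  assumes "finite D0" "infinite P" "P \<approx> U" "a \<in> P" "D \<subseteq> D0 \<union> underS |P| a"
  shows "g ` D \<prec> U"
proof -
  have 1: "|underS |P| a| <o |P|"
    using card_of_underS[OF card_of_Card_order, of a P] assms(4) by (simp add: Field_card_of)
  have 2: "|D0| <o |P|"
    using finite_ordLess_infinite[OF card_of_Well_order card_of_Well_order] assms(1,2) by (simp add: Field_card_of)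
  have 3: "|D0 \<union> underS |P| a| <o |P|" using card_of_Un_ordLess_infinite[OF assms(2) 2 1] .
  have 4: "|g ` D| \<le>o |D0 \<union> underS |P| a|"
    using card_of_image[of g D] card_of_mono1[OF assms(5)] ordLeq_transitive by blast
  have 5: "|P| =o |U|" using assms(3) eqpoll_iff_card_of_ordIso by blast
  have "|g ` D| <o |U|" using ordLeq_ordLess_trans[OF 4 3] 5 ordLess_ordIso_trans by blast
  then show ?thesis by (rule ordLess_lesspoll)
qed

context setting
begin

lemma final:
  assumes G: "funct G" "G \<subseteq> P \<times> U" "Inv G" "Domain G = P"
  shows "is_hom PM M (gfun G)"
proof -
  obtain u0 where u0: "u0 \<in> U" using U_ne by blast
  define e0 :: "nat \<Rightarrow> nat \<Rightarrow> 'a" where "e0 = (\<lambda>_ _. u0)"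
  have e0P: "range e0 \<subseteq> P" using u0 by (auto simp: e0_def P_def)
  have gx: "gfun G x = y" if "(x,y) \<in> G" for x y using gfun_eq[OF G(1) that] .
  have i: "\<forall>x\<in>P. gfun G x \<in> U"
  proof
    fix x assume "x \<in> P"
    then obtain y where "(x,y) \<in> G" using G(4) by blast
    then show "gfun G x \<in> U" using gx G(2) by blast
  qed
  have ii: "Rel M R (map (gfun G) xs)" if "set xs \<subseteq> P" "Rel PM R xs" for R xs
  proof -
    define L :: "('r, 'c, nat \<Rightarrow> 'a) fm list" where "L = [Atom R (map Par xs)]"
    have "\<forall>\<phi>\<in>set L. atomic \<phi> \<and> params \<phi> \<subseteq> Domain G" using that(1) G(4) by (auto simp: L_def)
    moreover have "psat L" unfolding psat_def L_def using e0P that(2) by (intro exI[of _ e0]) (auto simp: comp_def)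
    ultimately obtain e where "\<forall>\<phi>\<in>set L. sat M (gfun G) e \<phi>" using G(3) unfolding Inv_def by blast
    then show ?thesis by (simp add: L_def comp_def)
  qed
  have iii: "gfun G (Cst PM c) = Cst M c" for c
  proof -
    define L :: "('r, 'c, nat \<Rightarrow> 'a) fm list" where "L = [Eq (Par (Cst PM c)) (Con c)]"
    have "Cst PM c \<in> P" using wf by (simp add: power_omega_def wf_struct_def)
    then have "\<forall>\<phi>\<in>set L. atomic \<phi> \<and> params \<phi> \<subseteq> Domain G" using G(4) by (auto simp: L_def)
    moreover have "psat L" unfolding psat_def L_def using e0P by (intro exI[of _ e0]) (auto simp: power_omega_def)
    ultimately obtain e where "\<forall>\<phi>\<in>set L. sat M (gfun G) e \<phi>" using G(3) unfolding Inv_def by blast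
    then show ?thesis by (simp add: L_def)
  qed
  show ?thesis unfolding is_hom_def using i ii iii by blast
qed

lemma initial:
  assumes len: "length as = length bs" and asP: "set as \<subseteq> P" and bsU: "set bs \<subseteq> U"
    and H: "\<forall>\<phi> :: ('r, 'c, nat) fm. is_pp \<phi> \<longrightarrow> fv \<phi> = {} \<longrightarrow> params \<phi> \<subseteq> {..<length as} \<longrightarrow>
           true_in PM (\<lambda>i. as ! i) \<phi> \<longrightarrow> true_in M (\<lambda>i. bs ! i) \<phi>"
  shows "funct {(as!i, bs!i) | i. i < length as} \<and> Inv {(as!i, bs!i) | i. i < length as}"
proof -
  define G0 where "G0 = {(as!i, bs!i) | i. i < length as}"
  obtain u0 where u0: "u0 \<in> U" using U_ne by blast
  have fG0: "funct G0" unfolding funct_def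
  proof (intro allI impI)
    fix x y z assume "(x,y) \<in> G0" "(x,z) \<in> G0"
    then obtain i j where ij: "i < length as" "j < length as" "x = as!i" "y = bs!i" "x = as!j" "z = bs!j"
      unfolding G0_def by blast
    define \<phi> :: "('r, 'c, nat) fm" where "\<phi> = Eq (Par i) (Par j)"
    have "true_in PM (\<lambda>i. as ! i) \<phi>" using ij by (simp add: \<phi>_def true_in_def)
    then have "true_in M (\<lambda>i. bs ! i) \<phi>" using H ij(1,2) by (auto simp: \<phi>_def)
    then have "sat M (\<lambda>i. bs ! i) (\<lambda>_. u0) \<phi>" using u0 unfolding true_in_def by auto
    then show "y = z" using ij by (simp add: \<phi>_def)
  qed
  have domG0: "Domain G0 = {as!i | i. i < length as}" unfolding G0_def by auto
  define idx where "idx q = (SOME i. i < length as \<and> as!i = q)" for q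
  have idx: "idx q < length as \<and> as!(idx q) = q" if "q \<in> Domain G0" for q
  proof -
    have "\<exists>i. i < length as \<and> as!i = q" using that domG0 by auto
    then show ?thesis unfolding idx_def by (rule someI_ex)
  qed
  have gG0: "gfun G0 q = bs!(idx q)" if "q \<in> Domain G0" for q
  proof -
    have "(q, bs!(idx q)) \<in> G0" using idx[OF that] unfolding G0_def by force
    then show ?thesis using gfun_eq[OF fG0] by blast
  qed
  have "Inv G0" unfolding Inv_def
  proof (intro allI impI)
    fix L :: "('r, 'c, nat \<Rightarrow> 'a) fm list"
    assume L: "\<forall>\<phi>\<in>set L. atomic \<phi> \<and> params \<phi> \<subseteq> Domain G0" and "psat L"
    then obtain e where e: "range e \<subseteq> P" "\<forall>\<phi>\<in>set L. sat PM id e \<phi>" unfolding psat_def by blast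
    define L2 :: "('r, 'c, nat) fm list" where "L2 = map (amap Var (\<lambda>q. Par (idx q))) L"
    define vs where "vs = sorted_list_of_set (fv (conjl L2))"
    have vs: "set vs = fv (conjl L2)" unfolding vs_def using finite_fv[of "conjl L2"] by simp
    define \<Phi> where "\<Phi> = foldr Ex vs (conjl L2)"
    have at2: "\<forall>\<phi>\<in>set L2. atomic \<phi>" unfolding L2_def by (auto simp: atomic_amap)
    have pp: "is_pp \<Phi>" unfolding \<Phi>_def is_pp_foldr using is_pp_conjl2[OF at2] .
    have fv0: "fv \<Phi> = {}" unfolding \<Phi>_def fv_foldr vs by simp
    have parL2: "params \<psi> \<subseteq> {..<length as}" if \<psi>L2: "\<psi> \<in> set L2" for \<psi>
    proof
      fix x assume x: "x \<in> params \<psi>"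
      obtain \<phi> where \<phi>: "\<phi> \<in> set L" "\<psi> = amap Var (\<lambda>q. Par (idx q)) \<phi>" using \<psi>L2 L2_def by auto
      then have "atomic \<phi>" "params \<phi> \<subseteq> Domain G0" using L by auto
      then obtain q where "q \<in> params \<phi>" "x \<in> tpar (Par (idx q))"
        using params_amap[OF \<open>atomic \<phi>\<close>, of Var "\<lambda>q. Par (idx q)"] x \<phi>(2) by auto
      then show "x \<in> {..<length as}" using idx \<open>params \<phi> \<subseteq> Domain G0\<close> by (auto dest!: subsetD)
    qed
    have par0: "params \<Phi> \<subseteq> {..<length as}" unfolding \<Phi>_def params_foldr params_conjl using parL2 by blast
    have satL2: "sat N p e' (amap Var (\<lambda>q. Par (idx q)) \<phi>) = sat N (\<lambda>q. p (idx q)) e' \<phi>" if "atomic \<phi>"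
      for N and p :: "nat \<Rightarrow> 'z" and e' and \<phi> :: "('r, 'c, nat \<Rightarrow> 'a) fm"
      using that by (simp add: sat_amap)
    have "true_in PM (\<lambda>i. as ! i) \<Phi>" unfolding true_in_def
    proof (intro allI impI)
      fix e' :: "nat \<Rightarrow> nat \<Rightarrow> 'a" assume "range e' \<subseteq> P"
      define e'' where "e'' x = (if x \<in> set vs then e x else e' x)" for x
      have "sat PM (\<lambda>i. as ! i) e (conjl L2)" unfolding sat_conjl
      proof
        fix \<psi> assume "\<psi> \<in> set L2"
        then obtain \<phi> where \<phi>: "\<phi> \<in> set L" "\<psi> = amap Var (\<lambda>q. Par (idx q)) \<phi>" using L2_def by auto
        then have at: "atomic \<phi>" "params \<phi> \<subseteq> Domain G0" using L by auto
        have "sat PM id e \<phi>" using e(2) \<phi>(1) by blast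
        moreover have "\<forall>q\<in>params \<phi>. as ! (idx q) = id q" using idx at(2) by (metis id_apply subsetD)
        ultimately have "sat PM (\<lambda>q. as ! (idx q)) e \<phi>" using sat_coinc[of \<phi> e e] by metis
        then show "sat PM (\<lambda>i. as ! i) e \<psi>" unfolding \<phi>(2) satL2[OF at(1)] .
      qed
      moreover have "sat PM (\<lambda>i. as ! i) e (conjl L2) = sat PM (\<lambda>i. as ! i) e'' (conjl L2)"
        by (rule sat_coinc) (auto simp: e''_def vs)
      ultimately have "sat PM (\<lambda>i. as ! i) e'' (conjl L2)" by simp
      moreover have "\<forall>x\<in>set vs. e'' x \<in> P" using e(1) by (auto simp: e''_def)
      ultimately show "sat PM (\<lambda>i. as ! i) e' \<Phi>" unfolding \<Phi>_def sat_foldr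
        by (intro exI[of _ e'']) (auto simp: e''_def)
    qed
    then have "true_in M (\<lambda>i. bs ! i) \<Phi>" using H pp fv0 par0 by blast
    then have "sat M (\<lambda>i. bs ! i) (\<lambda>_. u0) \<Phi>" unfolding true_in_def using u0 by auto
    then obtain e3 where e3: "\<forall>x. x \<notin> set vs \<longrightarrow> e3 x = u0" "\<forall>x\<in>set vs. e3 x \<in> U"
      "sat M (\<lambda>i. bs ! i) e3 (conjl L2)" unfolding \<Phi>_def sat_foldr by blast
    have "range e3 \<subseteq> U" using e3(1,2) u0 by (metis image_subset_iff)
    moreover have "\<forall>\<phi>\<in>set L. sat M (gfun G0) e3 \<phi>"
    proof
      fix \<phi> assume \<phi>: "\<phi> \<in> set L"
      then have at: "atomic \<phi>" "params \<phi> \<subseteq> Domain G0" using L by auto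
      have "sat M (\<lambda>i. bs ! i) e3 (amap Var (\<lambda>q. Par (idx q)) \<phi>)"
        using e3(3) \<phi> unfolding sat_conjl L2_def by auto
      then have "sat M (\<lambda>q. bs ! (idx q)) e3 \<phi>" using satL2[OF at(1), of M "(!) bs" e3] by simp
      moreover have "\<forall>q\<in>params \<phi>. bs ! (idx q) = gfun G0 q" using gG0 at(2) by (metis subsetD)
      ultimately show "sat M (gfun G0) e3 \<phi>" using sat_coinc[of \<phi> e3 e3] by metis
    qed
    ultimately show "\<exists>e. range e \<subseteq> U \<and> (\<forall>\<phi>\<in>set L. sat M (gfun G0) e \<phi>)" by blast
  qed
  then show ?thesis using fG0 G0_def by simp
qed

end



unbundle cardinal_syntax

context setting
begin

lemma Domain_Union_chain:
  "Domain (\<Union>C) = (\<Union>X\<in>C. Domain X)" by auto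

theorem main: "hom_lifting M"
  unfolding hom_lifting_def
proof (intro allI impI)
  fix as :: "(nat \<Rightarrow> 'a) list" and bs :: "'a list"
  assume len: "length as = length bs" and asP: "set as \<subseteq> P" and bsU: "set bs \<subseteq> U"
    and H: "\<forall>\<phi> :: ('r, 'c, nat) fm. is_pp \<phi> \<longrightarrow> fv \<phi> = {} \<longrightarrow> params \<phi> \<subseteq> {..<length as} \<longrightarrow>
           true_in PM (\<lambda>i. as ! i) \<phi> \<longrightarrow> true_in M (\<lambda>i. bs ! i) \<phi>"
  define G0 where "G0 = {(as!i, bs!i) | i. i < length as}"
  have G0: "funct G0" "Inv G0" using initial[OF len asP bsU H] unfolding G0_def by auto
  define D0 where "D0 = set as"
  have "Domain G0 = {as!i | i. i < length as}" unfolding G0_def by blast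
  then have domG0: "Domain G0 = D0" unfolding D0_def by (simp add: set_conv_nth)
  define r where "r = |P|"
  have Fr: "Field r = P" unfolding r_def by (rule Field_card_of)
  have wo: "wo_rel r" unfolding r_def by (rule Card_order_wo_rel[OF card_of_Card_order])
  define closedc where "closedc G \<longleftrightarrow> (\<forall>x\<in>Domain G - D0. \<forall>y. (y,x) \<in> r \<longrightarrow> y \<in> Domain G)" for G :: "((nat \<Rightarrow> 'a) \<times> 'a) set"
  define \<G> where "\<G> = {G. G0 \<subseteq> G \<and> G \<subseteq> P \<times> U \<and> funct G \<and> closedc G \<and> Inv G}"
  have G0P: "G0 \<subseteq> P \<times> U"
  proof
    fix z assume "z \<in> G0"
    then obtain i where "i < length as" "z = (as!i, bs!i)" unfolding G0_def by blast
    then show "z \<in> P \<times> U" using asP bsU len by (auto simp: nth_mem subsetD)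
  qed
  have G0G: "G0 \<in> \<G>" unfolding \<G>_def closedc_def using G0 G0P domG0 by auto
  have "\<forall>C\<in>chains \<G>. \<exists>Ub\<in>\<G>. \<forall>X\<in>C. X \<subseteq> Ub"
  proof
    fix C assume C: "C \<in> chains \<G>"
    define C' where "C' = insert G0 C"
    have C'G: "C' \<subseteq> \<G>" using C G0G unfolding C'_def chains_def by auto
    have ch: "\<forall>X\<in>C'. \<forall>Y\<in>C'. X \<subseteq> Y \<or> Y \<subseteq> X"
      using C C'G unfolding C'_def chains_def chain_subset_def \<G>_def by blast
    define Ub where "Ub = \<Union>C'"
    have fUb: "funct Ub" unfolding funct_def
    proof (intro allI impI)
      fix x y z assume "(x,y) \<in> Ub" "(x,z) \<in> Ub"
      then obtain X Y where XY: "X \<in> C'" "Y \<in> C'" "(x,y) \<in> X" "(x,z) \<in> Y" unfolding Ub_def by blast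
      have fX: "funct X" "funct Y" using XY(1,2) C'G unfolding \<G>_def by auto
      show "y = z"
      proof (cases "X \<subseteq> Y")
        case True then show ?thesis using fX(2) XY(3,4) unfolding funct_def by blast
      next
        case False then have "Y \<subseteq> X" using ch XY(1,2) by blast
        then show ?thesis using fX(1) XY(3,4) unfolding funct_def by blast
      qed
    qed
    have gUb: "gfun Ub q = gfun X q" if XC: "X \<in> C'" "q \<in> Domain X" for X q
    proof -
      obtain y where "(q,y) \<in> X" using XC(2) by blast
      moreover have "funct X" using XC(1) C'G unfolding \<G>_def by auto
      moreover have "(q,y) \<in> Ub" using \<open>(q,y) \<in> X\<close> XC(1) unfolding Ub_def by blast
      ultimately show ?thesis using gfun_eq fUb by metis
    qed
    have "Inv Ub" unfolding Inv_def
    proof (intro allI impI)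
      fix L :: "('r, 'c, nat \<Rightarrow> 'a) fm list"
      assume L: "\<forall>\<phi>\<in>set L. atomic \<phi> \<and> params \<phi> \<subseteq> Domain Ub" and pL: "psat L"
      define S where "S = (\<Union>\<phi>\<in>set L. params \<phi>)"
      have fS: "finite S" unfolding S_def using finite_params by blast
      have SD: "S \<subseteq> Domain Ub" using L unfolding S_def by blast
      define T where "T = (\<lambda>q. (q, SOME y. (q,y) \<in> Ub)) ` S"
      have fT: "finite T" unfolding T_def using fS by blast
      have TU: "T \<subseteq> \<Union>C'"
      proof
        fix z assume "z \<in> T"
        then obtain q where "q \<in> S" "z = (q, SOME y. (q,y) \<in> Ub)" unfolding T_def by blast
        moreover have "\<exists>y. (q,y) \<in> Ub" using SD \<open>q \<in> S\<close> by blast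
        ultimately show "z \<in> \<Union>C'" unfolding Ub_def by (metis someI_ex)
      qed
      have chain: "subset.chain UNIV C'" using ch unfolding subset.chain_def by blast
      obtain X where X: "X \<in> C'" "T \<subseteq> X"
        using finite_subset_Union_chain[OF fT TU _ chain] unfolding C'_def by blast
      have SX: "S \<subseteq> Domain X"
      proof
        fix q assume "q \<in> S"
        then have "(q, SOME y. (q,y) \<in> Ub) \<in> X" using X(2) unfolding T_def by blast
        then show "q \<in> Domain X" by blast
      qed
      have InvX: "Inv X" using X(1) C'G unfolding \<G>_def by auto
      have "\<forall>\<phi>\<in>set L. atomic \<phi> \<and> params \<phi> \<subseteq> Domain X" using L SX unfolding S_def by blast
      then obtain e where e: "range e \<subseteq> U" "\<forall>\<phi>\<in>set L. sat M (gfun X) e \<phi>"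
        using InvX pL unfolding Inv_def by blast
      have "\<forall>\<phi>\<in>set L. sat M (gfun Ub) e \<phi>"
      proof
        fix \<phi> assume "\<phi> \<in> set L"
        have "\<forall>q\<in>params \<phi>. gfun X q = gfun Ub q"
        proof
          fix q assume "q \<in> params \<phi>"
          then have "q \<in> Domain X" using SX \<open>\<phi> \<in> set L\<close> unfolding S_def by blast
          then show "gfun X q = gfun Ub q" using gUb[OF X(1)] by simp
        qed
        then show "sat M (gfun Ub) e \<phi>" using e(2) \<open>\<phi> \<in> set L\<close> sat_coinc[of \<phi> e e "gfun X" "gfun Ub" M] by auto
      qed
      then show "\<exists>e. range e \<subseteq> U \<and> (\<forall>\<phi>\<in>set L. sat M (gfun Ub) e \<phi>)" using e(1) by blast
    qed
    moreover have "G0 \<subseteq> Ub" unfolding Ub_def C'_def by blast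
    moreover have "Ub \<subseteq> P \<times> U" using C'G unfolding Ub_def \<G>_def by blast
    moreover have "closedc Ub" unfolding closedc_def
    proof (intro ballI allI impI)
      fix x y assume x: "x \<in> Domain Ub - D0" and "(y,x) \<in> r"
      then obtain X where "X \<in> C'" "x \<in> Domain X" unfolding Ub_def by blast
      moreover have "closedc X" using \<open>X \<in> C'\<close> C'G unfolding \<G>_def by auto
      ultimately have "y \<in> Domain X" using x \<open>(y,x) \<in> r\<close> unfolding closedc_def by blast
      then show "y \<in> Domain Ub" using \<open>X \<in> C'\<close> unfolding Ub_def by blast
    qed
    ultimately have "Ub \<in> \<G>" using fUb unfolding \<G>_def by blast
    moreover have "\<forall>X\<in>C. X \<subseteq> Ub" unfolding Ub_def C'_def by blast
    ultimately show "\<exists>Ub\<in>\<G>. \<forall>X\<in>C. X \<subseteq> Ub" by blast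
  qed
  then obtain Gm where Gm: "Gm \<in> \<G>" "\<forall>X\<in>\<G>. Gm \<subseteq> X \<longrightarrow> X = Gm" using Zorn_Lemma2 by blast
  have Gm': "G0 \<subseteq> Gm" "Gm \<subseteq> P \<times> U" "funct Gm" "closedc Gm" "Inv Gm" using Gm(1) unfolding \<G>_def by auto
  have DomP: "Domain Gm = P"
  proof (rule ccontr)
    assume ne: "Domain Gm \<noteq> P"
    have "Domain Gm \<subseteq> P" using Gm'(2) by blast
    define B where "B = P - Domain Gm"
    have BF: "B \<subseteq> Field r" "B \<noteq> {}" using ne \<open>Domain Gm \<subseteq> P\<close> Fr unfolding B_def by auto
    define a where "a = wo_rel.minim r B"
    have aB: "a \<in> B" unfolding a_def using wo_rel.minim_in[OF wo BF] .
    have aleast: "(a,b) \<in> r" if "b \<in> B" for b unfolding a_def using wo_rel.minim_least[OF wo BF(1) that] .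
    have aP: "a \<in> P" and aD: "a \<notin> Domain Gm" using aB unfolding B_def by auto
    have sub: "Domain Gm \<subseteq> D0 \<union> underS r a"
    proof
      fix x assume x: "x \<in> Domain Gm"
      show "x \<in> D0 \<union> underS r a"
      proof (cases "x \<in> D0")
        case False
        have "x \<in> Field r" using x \<open>Domain Gm \<subseteq> P\<close> Fr by blast
        then have "(x,a) \<in> r \<or> (a,x) \<in> r" using wo_rel.TOTALS[OF wo] aP Fr by blast
        moreover have "(a,x) \<notin> r" using Gm'(4) x False aD unfolding closedc_def by blast
        ultimately have "(x,a) \<in> r" by blast
        moreover have "x \<noteq> a" using x aD by blast
        ultimately show ?thesis unfolding underS_def by blast
      qed simp
    qed
    have finD0: "finite D0" unfolding D0_def by simp
    have infP: "infinite P"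
    proof
      assume "finite P"
      then have "finite U" using card eqpoll_finite_iff P_def by metis
      then show False using satd unfolding saturated_def by blast
    qed
    have PU: "P \<approx> U" using card P_def by simp
    have small: "gfun Gm ` Domain Gm \<prec> U"
      using small_lemma[OF finD0 infP PU aP] sub r_def by blast
    obtain b where b: "b \<in> U" "Inv (insert (a,b) Gm)" using extend[OF Gm'(3,2,5) small aP aD] by blast
    define G' where "G' = insert (a,b) Gm"
    have "G' \<in> \<G>"
    proof -
      have "G0 \<subseteq> G'" using Gm'(1) unfolding G'_def by blast
      moreover have "G' \<subseteq> P \<times> U" using Gm'(2) aP b(1) unfolding G'_def by blast
      moreover have "funct G'" using Gm'(3) aD unfolding G'_def funct_def by blast
      moreover have "closedc G'" unfolding closedc_def
      proof (intro ballI allI impI)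
        fix x y assume x: "x \<in> Domain G' - D0" and yx: "(y,x) \<in> r"
        show "y \<in> Domain G'"
        proof (cases "x = a")
          case True
          show ?thesis
          proof (cases "y \<in> Domain Gm")
            case False
            have "y \<in> Field r" using yx by (rule FieldI1)
            then have "y \<in> B" using False Fr unfolding B_def by blast
            then have "(a,y) \<in> r" by (rule aleast)
            then have "y = a" using yx True wo_rel.ANTISYM[OF wo] unfolding antisym_def by blast
            then show ?thesis unfolding G'_def by blast
          qed (auto simp: G'_def)
        next
          case False
          then have "x \<in> Domain Gm - D0" using x unfolding G'_def by blast
          then have "y \<in> Domain Gm" using Gm'(4) yx unfolding closedc_def by blast
          then show ?thesis unfolding G'_def by blast
        qed
      qed
      moreover have "Inv G'" using b(2) unfolding G'_def .
      ultimately show ?thesis unfolding \<G>_def by blast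
    qed
    moreover have "Gm \<subseteq> G'" unfolding G'_def by blast
    ultimately have "G' = Gm" using Gm(2) by blast
    then have "a \<in> Domain Gm" unfolding G'_def by blast
    then show False using aD by blast
  qed
  have hom: "is_hom PM M (gfun Gm)" using final[OF Gm'(3,2,5) DomP] .
  have "\<forall>i < length as. gfun Gm (as ! i) = bs ! i"
  proof (intro allI impI)
    fix i assume "i < length as"
    then have "(as!i, bs!i) \<in> Gm" using Gm'(1) unfolding G0_def by blast
    then show "gfun Gm (as ! i) = bs ! i" using gfun_eq[OF Gm'(3)] by blast
  qed
  then show "\<exists>h. is_hom PM M h \<and> (\<forall>i < length as. h (as ! i) = bs ! i)" using hom by blast
qed

end

theorem lemma3:
  fixes ar :: "'r \<Rightarrow> nat" and M :: "('r, 'c, 'a) struct"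
  assumes "wf_struct ar M"
    and "saturated M"
    and "{f :: nat \<Rightarrow> 'a. \<forall>n. f n \<in> Univ M} \<approx> Univ M"
  shows "hom_lifting M"
proof -
  interpret setting ar M using assms by unfold_locales
  show ?thesis by (rule main)
qed


end
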